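(* Let $G_7$ be the graph on vertex set $\{0,1,\dots,6\}$ with edge set $\{01,12,23,34,45,56,60,03,04,13,14,63,64,25\}$. Then $\beta(G_7,\mathbf 1)=\alpha(G_7,\mathbf 1)=2$, where $\mathbf 1$ is the all-ones weight vector.
   Context: A realization of a graph $G$ on $n$ vertices is a tuple $(S_1,\dots,S_n)$ of Pauli strings (tensor products of matrices from $\{I,X,Y,Z\}$) of common length with $S_i,S_j$ anticommuting iff $i\sim j$ and commuting otherwise. $\beta(G,w)=\sup_\rho\sum_iw_i\operatorname{tr}(\rho S_i)^2$ over density matrices $\rho$ (independent of the realization); $\alpha(G,w)=\max\{\sum_{i\in I}w_i:I\text{ independent}\}$. (For instance, in vertex order $0,\dots,6$, the strings $Z_1,\ X_1X_2,\ Z_2,\ Y_1X_2X_3,\ Y_1Z_3,\ Z_1Y_2,\ X_1$ on three qubits, where subscripts indicate the qubit acted on, realize $G_7$.) *)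

theory Defs
  imports "HOL-Analysis.Analysis" "HOL-Library.Complex_Order"
begin

datatype pauli = PI | PX | PY | PZ

fun pmat :: "pauli \<Rightarrow> nat \<Rightarrow> nat \<Rightarrow> complex" where
  "pmat PI r c = (if r = c then 1 else 0)"
| "pmat PX r c = (if r \<noteq> c then 1 else 0)"
| "pmat PY r c = (if r = c then 0 else if r = 0 then - \<i> else \<i>)"
| "pmat PZ r c = (if r = c then (if r = 0 then 1 else -1) else 0)"

(* Square matrices of dimension d are represented as functions on indices < d *)
type_synonym cmat = "nat \<Rightarrow> nat \<Rightarrow> complex"

(* Matrix of a Pauli string (tensor product); qubit k corresponds to bit k of the index *)
definition pstring_mat :: "pauli list \<Rightarrow> cmat" where
  "pstring_mat P r c = (\<Prod>k<length P. pmat (P ! k) (r div 2 ^ k mod 2) (c div 2 ^ k mod 2))"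

definition mmul :: "nat \<Rightarrow> cmat \<Rightarrow> cmat \<Rightarrow> cmat" where
  "mmul d A B i j = (\<Sum>k<d. A i k * B k j)"

definition mtrace :: "nat \<Rightarrow> cmat \<Rightarrow> complex" where
  "mtrace d A = (\<Sum>i<d. A i i)"

definition density :: "nat \<Rightarrow> cmat \<Rightarrow> bool" where
  "density d \<rho> \<longleftrightarrow>
     (\<forall>i<d. \<forall>j<d. \<rho> j i = cnj (\<rho> i j)) \<and>
     (\<forall>v :: nat \<Rightarrow> complex. (0::complex) \<le> (\<Sum>i<d. \<Sum>j<d. cnj (v i) * \<rho> i j * v j)) \<and>
     mtrace d \<rho> = 1"

definition anticommute :: "nat \<Rightarrow> cmat \<Rightarrow> cmat \<Rightarrow> bool" where
  "anticommute d A B \<longleftrightarrow> (\<forall>i<d. \<forall>j<d. mmul d A B i j = - mmul d B A i j)"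

definition commute :: "nat \<Rightarrow> cmat \<Rightarrow> cmat \<Rightarrow> bool" where
  "commute d A B \<longleftrightarrow> (\<forall>i<d. \<forall>j<d. mmul d A B i j = mmul d B A i j)"

definition realization :: "(nat \<Rightarrow> nat \<Rightarrow> bool) \<Rightarrow> nat \<Rightarrow> (nat \<Rightarrow> pauli list) \<Rightarrow> nat \<Rightarrow> bool" where
  "realization G n S m \<longleftrightarrow>
     (\<forall>i<n. length (S i) = m) \<and>
     (\<forall>i<n. \<forall>j<n. i \<noteq> j \<longrightarrow>
        (G i j \<longrightarrow> anticommute (2 ^ m) (pstring_mat (S i)) (pstring_mat (S j))) \<and>
        (\<not> G i j \<longrightarrow> commute (2 ^ m) (pstring_mat (S i)) (pstring_mat (S j))))"

definition beta :: "nat \<Rightarrow> (nat \<Rightarrow> real) \<Rightarrow> (nat \<Rightarrow> pauli list) \<Rightarrow> nat \<Rightarrow> real" where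
  "beta n w S m = Sup {(\<Sum>i<n. w i * (Re (mtrace (2 ^ m) (mmul (2 ^ m) \<rho> (pstring_mat (S i)))))^2)
                       | \<rho>. density (2 ^ m) \<rho>}"

definition independent :: "(nat \<Rightarrow> nat \<Rightarrow> bool) \<Rightarrow> nat set \<Rightarrow> bool" where
  "independent G I \<longleftrightarrow> (\<forall>i\<in>I. \<forall>j\<in>I. \<not> G i j)"

definition alpha :: "(nat \<Rightarrow> nat \<Rightarrow> bool) \<Rightarrow> nat \<Rightarrow> (nat \<Rightarrow> real) \<Rightarrow> real" where
  "alpha G n w = Max {(\<Sum>i\<in>I. w i) | I. I \<subseteq> {..<n} \<and> independent G I}"

definition G7_edges :: "(nat \<times> nat) set" where
  "G7_edges = {(0,1),(1,2),(2,3),(3,4),(4,5),(5,6),(6,0),(0,3),(0,4),(1,3),(1,4),(6,3),(6,4),(2,5)}"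

definition G7 :: "nat \<Rightarrow> nat \<Rightarrow> bool" where
  "G7 i j \<longleftrightarrow> (i, j) \<in> G7_edges \<or> (j, i) \<in> G7_edges"

end

theory Submission
  imports Defs
begin


lemma sum_double: "(\<Sum>c<2*(N::nat). g c) = (\<Sum>c<N. g (2*c) + g (2*c+1))"
  by (induction N) (simp_all add: algebra_simps)

lemma div2k_even: "(2*c) div 2^(Suc k) = (c::nat) div 2^k"
  by (simp add: div_mult2_eq)
lemma div2k_odd: "(2*c+1) div 2^(Suc k) = (c::nat) div 2^k"
  by (simp add: div_mult2_eq)

lemma core: "(\<Sum>c<2^m. \<Prod>k<m. f k (c div 2^k mod 2)) = (\<Prod>k<m. f k 0 + f k (1::nat) :: 'a::comm_semiring_1)"
proof (induction m arbitrary: f)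
  case 0 then show ?case by simp
next
  case (Suc m)
  have "(\<Sum>c<2^Suc m. \<Prod>k<Suc m. f k (c div 2^k mod 2))
     = (\<Sum>c<2^m. (\<Prod>k<Suc m. f k ((2*c) div 2^k mod 2)) + (\<Prod>k<Suc m. f k ((2*c+1) div 2^k mod 2)))"
    by (simp add: sum_double)
  also have "\<dots> = (\<Sum>c<2^m. f 0 0 * (\<Prod>k<m. f (Suc k) (c div 2^k mod 2)) + f 0 1 * (\<Prod>k<m. f (Suc k) (c div 2^k mod 2)))"
    by (simp only: prod.lessThan_Suc_shift div2k_even div2k_odd) simp
  also have "\<dots> = (f 0 0 + f 0 1) * (\<Sum>c<2^m. (\<Prod>k<m. f (Suc k) (c div 2^k mod 2)))"
    by (simp add: algebra_simps sum_distrib_left sum.distrib)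
  also have "\<dots> = (f 0 0 + f 0 1) * (\<Prod>k<m. f (Suc k) 0 + f (Suc k) 1)"
    using Suc[of "\<lambda>k. f (Suc k)"] by simp
  also have "\<dots> = (\<Prod>k<Suc m. f k 0 + f k 1)"
    by (simp only: prod.lessThan_Suc_shift)
  finally show ?case .
qed

definition pm2 :: "pauli \<Rightarrow> pauli \<Rightarrow> nat \<Rightarrow> nat \<Rightarrow> complex" where
  "pm2 p q a b = pmat p a 0 * pmat q 0 b + pmat p a 1 * pmat q 1 b"

lemma pstring_mmul:
  assumes "length P = m" "length Q = m"
  shows "mmul (2^m) (pstring_mat P) (pstring_mat Q) r s
       = (\<Prod>k<m. pm2 (P!k) (Q!k) (r div 2^k mod 2) (s div 2^k mod 2))"
proof -
  have "mmul (2^m) (pstring_mat P) (pstring_mat Q) r s =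
     (\<Sum>c<2^m. \<Prod>k<m. pmat (P ! k) (r div 2 ^ k mod 2) (c div 2 ^ k mod 2) * pmat (Q ! k) (c div 2 ^ k mod 2) (s div 2 ^ k mod 2))"
    unfolding mmul_def pstring_mat_def using assms by (simp add: prod.distrib)
  also have "\<dots> = (\<Prod>k<m. pm2 (P!k) (Q!k) (r div 2^k mod 2) (s div 2^k mod 2))"
    by (subst core) (simp add: pm2_def)
  finally show ?thesis .
qed



definition psg :: "pauli \<Rightarrow> pauli \<Rightarrow> complex" where
  "psg p q = (if p = PI \<or> q = PI \<or> p = q then 1 else -1)"

lemma lt2: "(a::nat) < 2 \<Longrightarrow> a = 0 \<or> a = 1" by auto

lemma pm2_comm: "a < 2 \<Longrightarrow> b < 2 \<Longrightarrow> pm2 p q a b = psg p q * pm2 q p a b"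
  by (cases p; cases q; auto dest!: lt2 simp: pm2_def psg_def)

lemma pm2_sq: "a < 2 \<Longrightarrow> b < 2 \<Longrightarrow> pm2 p p a b = (if a = b then 1 else 0)"
  by (cases p; auto dest!: lt2 simp: pm2_def)

lemma pmat_herm: "a < 2 \<Longrightarrow> b < 2 \<Longrightarrow> pmat p a b = cnj (pmat p b a)"
  by (cases p; auto dest!: lt2)

lemma digits_eq:
  "r < 2^m \<Longrightarrow> s < 2^m \<Longrightarrow> (\<forall>k<m. r div 2^k mod 2 = s div 2^k mod 2) \<Longrightarrow> r = (s::nat)"
proof (induction m arbitrary: r s)
  case 0 then show ?case by simp
next
  case (Suc m)
  have a: "r mod 2 = s mod 2" using Suc.prems(3)[rule_format, of 0] by simp
  have "r div 2 = s div 2"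
  proof (rule Suc.IH)
    show "r div 2 < 2^m" "s div 2 < 2^m" using Suc.prems by auto
    show "\<forall>k<m. r div 2 div 2 ^ k mod 2 = s div 2 div 2 ^ k mod 2"
      using Suc.prems(3) by (auto simp: div_mult2_eq[symmetric])
  qed
  then show ?case using a by (metis div_mult_mod_eq)
qed

lemma prod_indic: "finite A \<Longrightarrow> (\<Prod>k\<in>A. (if P k then 1 else 0::complex)) = (if \<forall>k\<in>A. P k then 1 else 0)"
  by (induction A rule: finite_induct) auto

lemma pstring_comm:
  assumes "length P = m" "length Q = m"
  shows "mmul (2^m) (pstring_mat P) (pstring_mat Q) r s
       = (\<Prod>k<m. psg (P!k) (Q!k)) * mmul (2^m) (pstring_mat Q) (pstring_mat P) r s"
proof -
  have "\<And>k. pm2 (P!k) (Q!k) (r div 2^k mod 2) (s div 2^k mod 2) = psg (P!k) (Q!k) * pm2 (Q!k) (P!k) (r div 2^k mod 2) (s div 2^k mod 2)"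
    by (rule pm2_comm) auto
  then show ?thesis using assms by (simp only: pstring_mmul prod.distrib[symmetric])
qed

lemma pstring_sq:
  assumes "length P = m" "r < 2^m" "s < 2^m"
  shows "mmul (2^m) (pstring_mat P) (pstring_mat P) r s = (if r = s then 1 else 0)"
proof -
  have "mmul (2^m) (pstring_mat P) (pstring_mat P) r s
     = (\<Prod>k<m. (if r div 2^k mod 2 = s div 2^k mod 2 then 1 else 0))"
    using assms by (simp add: pstring_mmul pm2_sq)
  also have "\<dots> = (if r = s then 1 else 0)"
    using digits_eq[OF assms(2,3)] by (auto simp: prod_indic)
  finally show ?thesis .
qed

lemma pstring_herm: "pstring_mat P r c = cnj (pstring_mat P c r)"
proof -
  have "\<And>k. pmat (P!k) (r div 2^k mod 2) (c div 2^k mod 2) = cnj (pmat (P!k) (c div 2^k mod 2) (r div 2^k mod 2))"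
    by (rule pmat_herm) auto
  then show ?thesis unfolding pstring_mat_def by simp
qed



definition Idm :: "nat \<Rightarrow> cmat" where "Idm d i j = (if i < d \<and> i = j then 1 else 0)"
definition trunc :: "nat \<Rightarrow> cmat \<Rightarrow> cmat" where "trunc d A i j = (if i < d \<and> j < d then A i j else 0)"
definition inT :: "nat \<Rightarrow> cmat \<Rightarrow> bool" where "inT d A \<longleftrightarrow> (\<forall>i j. \<not> (i < d \<and> j < d) \<longrightarrow> A i j = 0)"
definition adj :: "cmat \<Rightarrow> cmat" where "adj A i j = cnj (A j i)"
definition madd :: "cmat \<Rightarrow> cmat \<Rightarrow> cmat" where "madd A B i j = A i j + B i j"
definition msub :: "cmat \<Rightarrow> cmat \<Rightarrow> cmat" where "msub A B i j = A i j - B i j"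
definition msc :: "complex \<Rightarrow> cmat \<Rightarrow> cmat" where "msc c A i j = c * A i j"
definition msum :: "('a \<Rightarrow> cmat) \<Rightarrow> 'a set \<Rightarrow> cmat" where "msum f S i j = (\<Sum>k\<in>S. f k i j)"
definition phi :: "nat \<Rightarrow> cmat \<Rightarrow> cmat \<Rightarrow> complex" where "phi d \<rho> M = mtrace d (mmul d \<rho> M)"

lemma mmul_assoc: "mmul d (mmul d A B) C = mmul d A (mmul d B C)"
proof (rule ext, rule ext)
  fix i j
  have "mmul d (mmul d A B) C i j = (\<Sum>k<d. \<Sum>l<d. A i l * B l k * C k j)"
    unfolding mmul_def by (simp add: sum_distrib_right)
  also have "\<dots> = (\<Sum>l<d. \<Sum>k<d. A i l * B l k * C k j)" by (rule sum.swap)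
  also have "\<dots> = mmul d A (mmul d B C) i j"
    unfolding mmul_def by (simp add: sum_distrib_left mult.assoc)
  finally show "mmul d (mmul d A B) C i j = mmul d A (mmul d B C) i j" .
qed

lemma mmul_madd_l: "mmul d (madd A B) C = madd (mmul d A C) (mmul d B C)"
  unfolding mmul_def madd_def fun_eq_iff by (simp add: algebra_simps sum.distrib)
lemma mmul_madd_r: "mmul d C (madd A B) = madd (mmul d C A) (mmul d C B)"
  unfolding mmul_def madd_def fun_eq_iff by (simp add: algebra_simps sum.distrib)
lemma mmul_msub_l: "mmul d (msub A B) C = msub (mmul d A C) (mmul d B C)"
  unfolding mmul_def msub_def fun_eq_iff by (simp add: algebra_simps sum_subtractf)
lemma mmul_msub_r: "mmul d C (msub A B) = msub (mmul d C A) (mmul d C B)"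
  unfolding mmul_def msub_def fun_eq_iff by (simp add: algebra_simps sum_subtractf)
lemma mmul_msc_l: "mmul d (msc c A) C = msc c (mmul d A C)"
  unfolding mmul_def msc_def fun_eq_iff by (simp add: algebra_simps sum_distrib_left)
lemma mmul_msc_r: "mmul d C (msc c A) = msc c (mmul d C A)"
  unfolding mmul_def msc_def fun_eq_iff by (simp add: algebra_simps sum_distrib_left)
lemma mmul_msum_l: "mmul d (msum f S) C = msum (\<lambda>k. mmul d (f k) C) S"
  unfolding mmul_def msum_def fun_eq_iff by (simp add: sum_distrib_right) (intro allI sum.swap)
lemma mmul_msum_r: "mmul d C (msum f S) = msum (\<lambda>k. mmul d C (f k)) S"
  unfolding mmul_def msum_def fun_eq_iff by (simp add: sum_distrib_left) (intro allI sum.swap)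

lemma adj_mmul: "adj (mmul d A B) = mmul d (adj B) (adj A)"
  unfolding adj_def mmul_def fun_eq_iff by (simp add: mult.commute)
lemma adj_madd: "adj (madd A B) = madd (adj A) (adj B)"
  unfolding adj_def madd_def fun_eq_iff by simp
lemma adj_msub: "adj (msub A B) = msub (adj A) (adj B)"
  unfolding adj_def msub_def fun_eq_iff by simp
lemma adj_msc: "adj (msc c A) = msc (cnj c) (adj A)"
  unfolding adj_def msc_def fun_eq_iff by simp
lemma adj_msum: "adj (msum f S) = msum (\<lambda>k. adj (f k)) S"
  unfolding adj_def msum_def fun_eq_iff by simp
lemma adj_Idm: "adj (Idm d) = Idm d"
  unfolding adj_def Idm_def fun_eq_iff by simp

lemma inT_mmul: "inT d A \<Longrightarrow> inT d B \<Longrightarrow> inT d (mmul d A B)"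
  unfolding inT_def mmul_def by auto
lemma inT_madd: "inT d A \<Longrightarrow> inT d B \<Longrightarrow> inT d (madd A B)"
  unfolding inT_def madd_def by auto
lemma inT_msub: "inT d A \<Longrightarrow> inT d B \<Longrightarrow> inT d (msub A B)"
  unfolding inT_def msub_def by auto
lemma inT_msc: "inT d A \<Longrightarrow> inT d (msc c A)"
  unfolding inT_def msc_def by auto
lemma inT_msum: "(\<And>k. k \<in> S \<Longrightarrow> inT d (f k)) \<Longrightarrow> inT d (msum f S)"
  unfolding inT_def msum_def by auto
lemma inT_Idm: "inT d (Idm d)"
  unfolding inT_def Idm_def by auto
lemma inT_trunc: "inT d (trunc d A)"
  unfolding inT_def trunc_def by auto

lemma Idm_l: assumes "inT d A" shows "mmul d (Idm d) A = A"
proof (rule ext, rule ext)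
  fix i j
  show "mmul d (Idm d) A i j = A i j"
  proof (cases "i < d \<and> j < d")
    case True
    then have "mmul d (Idm d) A i j = (\<Sum>k<d. if i = k then A k j else 0)"
      unfolding mmul_def Idm_def by (intro sum.cong) auto
    then show ?thesis using True by simp
  next
    case False
    then have "mmul d (Idm d) A i j = 0"
      using assms unfolding mmul_def Idm_def inT_def by (intro sum.neutral) auto
    then show ?thesis using False assms unfolding inT_def by auto
  qed
qed
lemma Idm_r: assumes "inT d A" shows "mmul d A (Idm d) = A"
proof (rule ext, rule ext)
  fix i j
  show "mmul d A (Idm d) i j = A i j"
  proof (cases "i < d \<and> j < d")
    case True
    then have "mmul d A (Idm d) i j = (\<Sum>k<d. if k = j then A i k else 0)"
      unfolding mmul_def Idm_def by (intro sum.cong) auto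
    then show ?thesis using True by simp
  next
    case False
    then have "mmul d A (Idm d) i j = 0"
      using assms unfolding mmul_def Idm_def inT_def by (intro sum.neutral) auto
    then show ?thesis using False assms unfolding inT_def by auto
  qed
qed

lemma trunc_mmul: "mmul d (trunc d A) (trunc d B) = trunc d (mmul d A B)"
  unfolding trunc_def mmul_def fun_eq_iff by auto

lemma phi_madd: "phi d r (madd A B) = phi d r A + phi d r B"
  unfolding phi_def mtrace_def by (simp add: mmul_madd_r madd_def sum.distrib)
lemma phi_msub: "phi d r (msub A B) = phi d r A - phi d r B"
  unfolding phi_def mtrace_def by (simp add: mmul_msub_r msub_def sum_subtractf)
lemma phi_msc: "phi d r (msc c A) = c * phi d r A"
  unfolding phi_def mtrace_def by (simp add: mmul_msc_r msc_def sum_distrib_left)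
lemma phi_msum: "phi d r (msum f S) = (\<Sum>k\<in>S. phi d r (f k))"
  unfolding phi_def mtrace_def by (simp add: mmul_msum_r msum_def) (rule sum.swap)
lemma phi_trunc: "phi d r (trunc d A) = phi d r A"
  unfolding phi_def mtrace_def mmul_def trunc_def by simp
lemma phi_Idm: assumes "density d r" shows "phi d r (Idm d) = 1"
proof -
  have "phi d r (Idm d) = (\<Sum>i<d. \<Sum>k<d. if k = i then r i k else 0)"
    unfolding phi_def mtrace_def mmul_def Idm_def by (intro sum.cong refl) auto
  also have "\<dots> = mtrace d r" unfolding mtrace_def by simp
  finally show ?thesis using assms unfolding density_def by simp
qed

lemma phi_pos: assumes "density d r" shows "0 \<le> phi d r (mmul d (adj C) C)"
proof -
  have "phi d r (mmul d (adj C) C) = (\<Sum>i<d. \<Sum>k<d. \<Sum>l<d. cnj (cnj (C l i)) * r i k * cnj (C l k))"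
    unfolding phi_def mtrace_def mmul_def adj_def
    by (simp add: sum_distrib_left mult_ac)
  also have "\<dots> = (\<Sum>i<d. \<Sum>l<d. \<Sum>k<d. cnj (cnj (C l i)) * r i k * cnj (C l k))"
    by (rule sum.cong[OF refl], rule sum.swap)
  also have "\<dots> = (\<Sum>l<d. \<Sum>i<d. \<Sum>k<d. cnj (cnj (C l i)) * r i k * cnj (C l k))"
    by (rule sum.swap)
  finally have e: "phi d r (mmul d (adj C) C) = (\<Sum>l<d. \<Sum>i<d. \<Sum>k<d. cnj (cnj (C l i)) * r i k * cnj (C l k))" .
  have "0 \<le> (\<Sum>l<d. \<Sum>i<d. \<Sum>k<d. cnj (cnj (C l i)) * r i k * cnj (C l k))"
  proof (rule sum_nonneg)
    fix l assume "l \<in> {..<d}"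
    have "\<forall>v. 0 \<le> (\<Sum>i<d. \<Sum>j<d. cnj (v i) * r i j * v j)"
      using assms unfolding density_def by blast
    then show "0 \<le> (\<Sum>i<d. \<Sum>k<d. cnj (cnj (C l i)) * r i k * cnj (C l k))"
      by (rule allE[where x="\<lambda>k. cnj (C l k)"])
  qed
  then show ?thesis by (simp only: e)
qed

lemma Re_nonneg: "0 \<le> (z::complex) \<Longrightarrow> 0 \<le> Re z"
  by (simp add: less_eq_complex_def)



lemma msum_cong: "(\<And>k. k \<in> S \<Longrightarrow> f k = g k) \<Longrightarrow> msum f S = msum g S"
  unfolding msum_def fun_eq_iff by auto

lemma antisym_sum:
  fixes g :: "nat \<Rightarrow> nat \<Rightarrow> real"
  assumes "\<And>i j. i < n \<Longrightarrow> j < n \<Longrightarrow> i \<noteq> j \<Longrightarrow> g i j = - g j i"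
  shows "(\<Sum>i<n. \<Sum>j<n. g i j) = (\<Sum>i<n. g i i)"
proof -
  define h where "h i j = (if i = j then 0 else g i j)" for i j
  have "(\<Sum>i<n. \<Sum>j<n. h i j) = (\<Sum>j<n. \<Sum>i<n. h i j)" by (rule sum.swap)
  also have "\<dots> = (\<Sum>j<n. \<Sum>i<n. - h j i)"
  proof (intro sum.cong refl)
    fix j i assume "j \<in> {..<n}" "i \<in> {..<n}"
    then show "h i j = - h j i" using assms[of i j] by (auto simp: h_def)
  qed
  also have "\<dots> = - (\<Sum>i<n. \<Sum>j<n. h i j)" by (simp add: sum_negf)
  finally have h0: "(\<Sum>i<n. \<Sum>j<n. h i j) = 0" by simp
  have "(\<Sum>i<n. \<Sum>j<n. g i j) = (\<Sum>i<n. \<Sum>j<n. h i j + (if i = j then g i i else 0))"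
    by (intro sum.cong refl) (auto simp: h_def)
  also have "\<dots> = (\<Sum>i<n. \<Sum>j<n. h i j) + (\<Sum>i<n. g i i)"
    by (simp add: sum.distrib)
  finally show ?thesis using h0 by simp
qed

lemma quad_real:
  fixes s p :: real
  assumes "\<And>t. 0 \<le> s * p - 2 * t * s + t ^ 2 * p" "0 \<le> s"
  shows "s \<le> p ^ 2"
proof -
  have a0: "0 \<le> s * p" using assms(1)[of 0] by simp
  have a1: "0 \<le> s * p - 2 * s + p" using assms(1)[of 1] by simp
  have ap: "0 \<le> p * (p^2 - s)" using assms(1)[of p] by (simp add: algebra_simps power2_eq_square)
  consider "p > 0" | "p = 0" | "p < 0" by linarith
  then show ?thesis
  proof cases
    case 1 then show ?thesis using ap by (simp add: zero_le_mult_iff)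
  next
    case 2 then show ?thesis using a1 assms(2) by simp
  next
    case 3
    then have "s = 0" using a0 assms(2) by (simp add: zero_le_mult_iff)
    then show ?thesis using a1 3 by simp
  qed
qed

lemma G2:
  fixes d :: nat and \<rho> P :: cmat and B :: "nat \<Rightarrow> cmat" and n :: nat
  assumes dens: "density d \<rho>"
  and P1: "inT d P" and P2: "adj P = P" and P3: "mmul d P P = P"
  and B1: "\<And>i. i < n \<Longrightarrow> inT d (B i)"
  and B2: "\<And>i. i < n \<Longrightarrow> adj (B i) = B i"
  and B3: "\<And>i. i < n \<Longrightarrow> mmul d (B i) (B i) = Idm d"
  and B4: "\<And>i. i < n \<Longrightarrow> mmul d P (B i) = mmul d (B i) P"
  and B5: "\<And>i j. i < n \<Longrightarrow> j < n \<Longrightarrow> i \<noteq> j \<Longrightarrow> mmul d (B i) (B j) = msc (-1) (mmul d (B j) (B i))"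
  shows "(\<Sum>i<n. (Re (phi d \<rho> (mmul d P (B i))))^2) \<le> (Re (phi d \<rho> P))^2"
proof -
  define x where "x i = Re (phi d \<rho> (mmul d P (B i)))" for i
  define s where "s = (\<Sum>i<n. (x i)^2)"
  define p where "p = Re (phi d \<rho> P)"
  define Bs where "Bs = msum (\<lambda>i. msc (complex_of_real (x i)) (B i)) {..<n}"
  have Bs1: "inT d Bs" unfolding Bs_def using B1 by (intro inT_msum inT_msc) auto
  have Bs2: "adj Bs = Bs" unfolding Bs_def adj_msum adj_msc
    by (rule msum_cong) (simp add: B2)
  have Bs4: "mmul d P Bs = mmul d Bs P"
    unfolding Bs_def mmul_msum_l mmul_msum_r mmul_msc_l mmul_msc_r
    by (rule msum_cong) (simp add: B4)
  have phiPBs: "Re (phi d \<rho> (mmul d P Bs)) = s"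
    unfolding Bs_def mmul_msum_r mmul_msc_r phi_msum phi_msc s_def
    by (simp add: x_def power2_eq_square)
  have phiPBB: "Re (phi d \<rho> (mmul d P (mmul d Bs Bs))) = s * p"
  proof -
    have "mmul d P (mmul d Bs Bs) = msum (\<lambda>j. msum (\<lambda>i. msc (complex_of_real (x i * x j)) (mmul d P (mmul d (B i) (B j)))) {..<n}) {..<n}"
      unfolding Bs_def mmul_msum_l mmul_msum_r mmul_msc_l mmul_msc_r
      by (simp add: msc_def msum_def fun_eq_iff mult_ac sum_distrib_left)
    then have "Re (phi d \<rho> (mmul d P (mmul d Bs Bs))) = (\<Sum>j<n. \<Sum>i<n. x i * x j * Re (phi d \<rho> (mmul d P (mmul d (B i) (B j)))))"
      by (simp add: phi_msum phi_msc)
    also have "\<dots> = (\<Sum>i<n. x i * x i * Re (phi d \<rho> (mmul d P (mmul d (B i) (B i)))))"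
    proof (rule antisym_sum)
      fix i j assume "i < n" "j < n" "i \<noteq> j"
      then show "x j * x i * Re (phi d \<rho> (mmul d P (mmul d (B j) (B i)))) = - (x i * x j * Re (phi d \<rho> (mmul d P (mmul d (B i) (B j)))))"
        using B5[of j i] by (simp add: mmul_msc_r phi_msc)
    qed
    also have "\<dots> = (\<Sum>i<n. x i * x i * p)"
      by (intro sum.cong refl) (simp add: B3 Idm_r P1 p_def)
    also have "\<dots> = s * p" by (simp add: s_def sum_distrib_right power2_eq_square)
    finally show ?thesis .
  qed
  have key: "0 \<le> s * p - 2 * l * s + l ^ 2 * p" for l :: real
  proof -
    define E where "E = msub Bs (msc (complex_of_real l) (Idm d))"
    define C where "C = mmul d P E"
    have E1: "inT d E" unfolding E_def by (intro inT_msub inT_msc Bs1 inT_Idm)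
    have E2: "adj E = E" unfolding E_def adj_msub adj_msc adj_Idm Bs2 by simp
    have E4: "mmul d P E = mmul d E P"
      unfolding E_def mmul_msub_l mmul_msub_r mmul_msc_l mmul_msc_r Bs4 Idm_l[OF P1] Idm_r[OF P1] ..
    have "mmul d (adj C) C = mmul d P (mmul d E E)"
      unfolding C_def adj_mmul E2 P2
      by (metis E4 P3 mmul_assoc)
    also have "mmul d E E = msub (msub (mmul d Bs Bs) (msc (complex_of_real l) Bs)) (msc (complex_of_real l) E)"
      unfolding E_def mmul_msub_l mmul_msub_r mmul_msc_l mmul_msc_r
      by (simp add: Idm_l[OF Bs1] Idm_l[OF inT_Idm] Idm_r[OF Bs1])
    finally have eqC: "mmul d (adj C) C = mmul d P (msub (msub (mmul d Bs Bs) (msc (complex_of_real l) Bs)) (msc (complex_of_real l) E))" .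
    have "Re (phi d \<rho> (mmul d (adj C) C)) = s * p - l * s - l * (s - l * p)"
      unfolding eqC mmul_msub_r mmul_msc_r phi_msub phi_msc E_def mmul_msub_r mmul_msc_r Idm_r[OF P1]
      by (simp add: phiPBs phiPBB p_def)
    moreover have "0 \<le> Re (phi d \<rho> (mmul d (adj C) C))" by (rule Re_nonneg[OF phi_pos[OF dens]])
    ultimately show ?thesis by (simp add: algebra_simps power2_eq_square)
  qed
  have "s \<le> p ^ 2" by (rule quad_real[OF key]) (simp add: s_def sum_nonneg)
  then show ?thesis unfolding s_def p_def x_def .
qed



lemma msc_one[simp]: "msc 1 M = M" unfolding msc_def by simp
lemma msc_msc: "msc a (msc b M) = msc (a*b) M" unfolding msc_def by (simp add: fun_eq_iff mult.assoc)

lemma rel_sym: "a * a = 1 \<Longrightarrow> mmul d X Y = msc a (mmul d Y X) \<Longrightarrow> mmul d Y X = msc a (mmul d X Y)"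
  by (simp add: msc_msc)

lemma rel_prod:
  assumes "mmul d X Y = msc a (mmul d Y X)" "mmul d X Z = msc b (mmul d Z X)"
  shows "mmul d X (mmul d Y Z) = msc (a*b) (mmul d (mmul d Y Z) X)"
proof -
  have "mmul d X (mmul d Y Z) = mmul d (mmul d X Y) Z" by (simp add: mmul_assoc)
  also have "\<dots> = msc a (mmul d Y (mmul d X Z))" by (simp add: assms(1) mmul_msc_l mmul_assoc)
  also have "\<dots> = msc (a*b) (mmul d (mmul d Y Z) X)" by (simp add: assms(2) mmul_msc_r mmul_assoc msc_msc)
  finally show ?thesis .
qed

lemma proj:
  assumes W1: "inT d W" and W2: "adj W = W" and W3: "mmul d W W = Idm d"
  defines "P \<equiv> msc (1/2) (madd (Idm d) W)"
  shows "inT d P" "adj P = P" "mmul d P P = P"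
    "\<And>B. inT d B \<Longrightarrow> mmul d W B = mmul d B W \<Longrightarrow> mmul d P B = mmul d B P"
proof -
  show "inT d P" unfolding P_def by (intro inT_msc inT_madd inT_Idm W1)
  show "adj P = P" unfolding P_def adj_msc adj_madd adj_Idm W2 by simp
  show "mmul d P P = P"
    unfolding P_def mmul_msc_l mmul_msc_r mmul_madd_l mmul_madd_r W3 Idm_l[OF W1] Idm_r[OF W1] Idm_l[OF inT_Idm]
    by (simp add: msc_def madd_def fun_eq_iff algebra_simps)
  fix B assume B1: "inT d B" and B2: "mmul d W B = mmul d B W"
  show "mmul d P B = mmul d B P"
    unfolding P_def mmul_msc_l mmul_msc_r mmul_madd_l mmul_madd_r Idm_l[OF B1] Idm_r[OF B1] B2 ..
qed

lemma G7_tab: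
  "G7 0 1" "G7 0 3" "G7 0 4" "G7 1 3" "G7 1 4" "G7 3 4" "G7 1 0" "G7 3 0" "G7 4 0" "G7 3 1" "G7 4 1" "G7 4 3"
  "G7 0 6" "G7 3 6" "G7 4 6" "G7 1 2" "G7 2 1" "G7 5 6" "G7 6 5" "G7 2 5" "G7 5 2"
  "\<not> G7 1 6" "\<not> G7 6 1" "\<not> G7 2 6" "\<not> G7 6 2" "\<not> G7 1 5" "\<not> G7 5 1"
  "\<not> G7 0 2" "\<not> G7 2 0" "\<not> G7 2 4" "\<not> G7 4 2"
  by (simp_all add: G7_def G7_edges_def)

lemma less4: "i < (4::nat) \<longleftrightarrow> i = 0 \<or> i = 1 \<or> i = 2 \<or> i = 3" by auto
lemma less3: "i < (3::nat) \<longleftrightarrow> i = 0 \<or> i = 1 \<or> i = 2" by auto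

lemma sum4: "(\<Sum>i<(4::nat). g i) = g 0 + g 1 + g 2 + g 3"
  by (simp add: eval_nat_numeral ac_simps)
lemma sum3: "(\<Sum>i<(3::nat). g i) = g 0 + g 1 + g 2"
  by (simp add: eval_nat_numeral ac_simps)
lemma sum7: "(\<Sum>i<(7::nat). g i) = g 0 + g 1 + g 2 + g 3 + g 4 + g 5 + g 6"
  by (simp add: eval_nat_numeral ac_simps)

lemma pm_sq: "((x + y)/2)^2 + ((x - y)/2)^2 = (x^2 + y^2)/(2::real)"
  by (simp add: power2_eq_square field_simps)

lemma final_arith:
  fixes a0 a3 a4 b0 b3 b4 u v t e2 e5 :: real
  assumes "((a0+b0)/2)^2 + ((a3+b3)/2)^2 + ((a4+b4)/2)^2 + ((u+v)/2)^2 \<le> ((1+t)/2)^2"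
    "((a0-b0)/2)^2 + ((a3-b3)/2)^2 + ((a4-b4)/2)^2 + ((u-v)/2)^2 \<le> ((1-t)/2)^2"
    "e2^2 + e5^2 + t^2 \<le> 1"
  shows "a0^2 + u^2 + e2^2 + a3^2 + a4^2 + e5^2 + v^2 \<le> 2"
proof -
  have lin: "\<And>X1 X2 X3 X4 Y1 Y2 Y3 Y4 T1 T2 A0 B0 A3 B3 A4 B4 U V E2 E5 TT :: real.
    X1 + X2 + X3 + X4 \<le> T1 \<Longrightarrow> Y1 + Y2 + Y3 + Y4 \<le> T2 \<Longrightarrow> E2 + E5 + TT \<le> 1 \<Longrightarrow>
    T1 + T2 = (1 + TT)/2 \<Longrightarrow> X1 + Y1 = (A0 + B0)/2 \<Longrightarrow> X2 + Y2 = (A3 + B3)/2 \<Longrightarrow>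
    X3 + Y3 = (A4 + B4)/2 \<Longrightarrow> X4 + Y4 = (U + V)/2 \<Longrightarrow> 0 \<le> B0 \<Longrightarrow> 0 \<le> B3 \<Longrightarrow> 0 \<le> B4 \<Longrightarrow>
    A0 + U + E2 + A3 + A4 + E5 + V \<le> 2"
    by (simp add: field_simps)
  have "((1+t)/2)^2 + ((1-t)/2)^2 = (1 + t^2)/2" using pm_sq[of 1 t] by simp
  from lin[OF assms this pm_sq[of a0 b0] pm_sq[of a3 b3] pm_sq[of a4 b4] pm_sq[of u v]
    zero_le_power2[of b0] zero_le_power2[of b3] zero_le_power2[of b4]] show ?thesis .
qed

lemma upper_abstract:
  fixes A :: "nat \<Rightarrow> cmat"
  assumes dens: "density d \<rho>"
  and AT: "\<And>i. i < 7 \<Longrightarrow> inT d (A i)"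
  and AH: "\<And>i. i < 7 \<Longrightarrow> adj (A i) = A i"
  and AS: "\<And>i. i < 7 \<Longrightarrow> mmul d (A i) (A i) = Idm d"
  and AR: "\<And>i j. i < 7 \<Longrightarrow> j < 7 \<Longrightarrow> i \<noteq> j \<Longrightarrow> mmul d (A i) (A j) = msc (if G7 i j then -1 else 1) (mmul d (A j) (A i))"
  shows "(\<Sum>i<7. (Re (phi d \<rho> (A i)))^2) \<le> 2"
proof -
  define f where "f M = Re (phi d \<rho> M)" for M
  define U where "U = A 1"
  define V where "V = A 6"
  define W where "W = mmul d U V"
  have UV: "mmul d U V = mmul d V U" using AR[of 1 6] G7_tab unfolding U_def V_def by simp
  have UT: "inT d U" and VT: "inT d V" using AT unfolding U_def V_def by auto
  have UH: "adj U = U" and VH: "adj V = V" using AH unfolding U_def V_def by auto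
  have US: "mmul d U U = Idm d" and VS: "mmul d V V = Idm d" using AS unfolding U_def V_def by auto
  have WT: "inT d W" unfolding W_def by (intro inT_mmul UT VT)
  have WH: "adj W = W" unfolding W_def adj_mmul UH VH UV ..
  have WS: "mmul d W W = Idm d"
  proof -
    have "mmul d W W = mmul d U (mmul d (mmul d V U) V)" unfolding W_def by (simp add: mmul_assoc)
    also have "\<dots> = Idm d" unfolding UV[symmetric] by (simp add: mmul_assoc VS Idm_r[OF UT] US)
    finally show ?thesis .
  qed
  have WU: "mmul d W U = V"
  proof -
    have "mmul d W U = mmul d U (mmul d V U)" unfolding W_def by (simp add: mmul_assoc)
    also have "\<dots> = V" unfolding UV[symmetric] by (simp add: mmul_assoc[symmetric] US Idm_l[OF VT])
    finally show ?thesis .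
  qed
  have Wrel: "mmul d (A k) W = msc ((if G7 k 1 then -1 else 1) * (if G7 k 6 then -1 else 1)) (mmul d W (A k))"
    if "k < 7" "k \<noteq> 1" "k \<noteq> 6" for k
    unfolding W_def U_def V_def by (rule rel_prod; rule AR) (use that in auto)
  have WUrel: "mmul d U W = mmul d W U"
    using rel_prod[of d U U 1 V 1] UV unfolding W_def by simp
  have Wc: "mmul d W (A k) = mmul d (A k) W" if "k \<in> {0,3,4}" for k
    using Wrel[of k] that G7_tab by auto
  have Wa: "mmul d (A k) W = msc (-1) (mmul d W (A k))" "mmul d W (A k) = msc (-1) (mmul d (A k) W)"
    if "k \<in> {2,5}" for k
  proof -
    show "mmul d (A k) W = msc (-1) (mmul d W (A k))" using Wrel[of k] that G7_tab by auto
    then show "mmul d W (A k) = msc (-1) (mmul d (A k) W)" by (rule rel_sym[rotated]) simp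
  qed
  define Wm where "Wm = msc (-1) W"
  have WmT: "inT d Wm" unfolding Wm_def by (intro inT_msc WT)
  have WmH: "adj Wm = Wm" unfolding Wm_def adj_msc WH by simp
  have WmS: "mmul d Wm Wm = Idm d" unfolding Wm_def mmul_msc_l mmul_msc_r msc_msc WS by simp
  define Pp where "Pp = msc (1/2) (madd (Idm d) W)"
  define Pm where "Pm = msc (1/2) (madd (Idm d) Wm)"
  note pp = proj[OF WT WH WS, folded Pp_def]
  note pm = proj[OF WmT WmH WmS, folded Pm_def]
  define ix where "ix = [0,3,4,1::nat]"
  have ix1: "ix ! i \<in> {0,3,4,1}" if "i < 4" for i using that unfolding ix_def less4 by auto
  have ix2: "G7 (ix ! i) (ix ! j) \<and> ix ! i \<noteq> ix ! j" if "i < 4" "j < 4" "i \<noteq> j" for i j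
    using that unfolding ix_def less4 by (auto simp: G7_tab G7_tab[unfolded One_nat_def])
  have Wcomm: "mmul d W (A k) = mmul d (A k) W" if "k \<in> {0,3,4,1}" for k
    using Wc[of k] WUrel that unfolding U_def by auto
  have fam_T: "inT d (A (ix ! i))" "adj (A (ix ! i)) = A (ix ! i)" "mmul d (A (ix ! i)) (A (ix ! i)) = Idm d"
    if "i < 4" for i using ix1[OF that] AT AH AS by auto
  have fam_R: "mmul d (A (ix ! i)) (A (ix ! j)) = msc (-1) (mmul d (A (ix ! j)) (A (ix ! i)))"
    if "i < 4" "j < 4" "i \<noteq> j" for i j
    using AR[of "ix ! i" "ix ! j"] ix2[OF that] ix1[OF that(1)] ix1[OF that(2)] by auto
  have R1: "(\<Sum>i<4. (Re (phi d \<rho> (mmul d Pp (A (ix ! i)))))^2) \<le> (Re (phi d \<rho> Pp))^2"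
  proof (rule G2[OF dens pp(1,2,3)])
    show "mmul d Pp (A (ix ! i)) = mmul d (A (ix ! i)) Pp" if "i < 4" for i
      by (rule pp(4)[OF fam_T(1)[OF that]]) (rule Wcomm[OF ix1[OF that]])
  next
    show "mmul d (A (ix ! i)) (A (ix ! j)) = msc (-1) (mmul d (A (ix ! j)) (A (ix ! i)))"
      if "i < 4" "j < 4" "i \<noteq> j" for i j using that by (rule fam_R)
  qed (simp_all add: fam_T)
  have R2: "(\<Sum>i<4. (Re (phi d \<rho> (mmul d Pm (A (ix ! i)))))^2) \<le> (Re (phi d \<rho> Pm))^2"
  proof (rule G2[OF dens pm(1,2,3)])
    show "mmul d Pm (A (ix ! i)) = mmul d (A (ix ! i)) Pm" if "i < 4" for i
    proof (rule pm(4)[OF fam_T(1)[OF that]])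
      show "mmul d Wm (A (ix ! i)) = mmul d (A (ix ! i)) Wm"
        unfolding Wm_def mmul_msc_l mmul_msc_r using Wcomm[OF ix1[OF that]] by simp
    qed
  next
    show "mmul d (A (ix ! i)) (A (ix ! j)) = msc (-1) (mmul d (A (ix ! j)) (A (ix ! i)))"
      if "i < 4" "j < 4" "i \<noteq> j" for i j using that by (rule fam_R)
  qed (simp_all add: fam_T)
  define Bf where "Bf = [A 2, A 5, W]"
  have R3: "(\<Sum>i<3. (Re (phi d \<rho> (mmul d (Idm d) (Bf ! i))))^2) \<le> (Re (phi d \<rho> (Idm d)))^2"
  proof (rule G2[OF dens inT_Idm adj_Idm Idm_l[OF inT_Idm]])
    have T: "inT d (Bf ! i)" if "i < 3" for i using that AT WT unfolding Bf_def less3 by auto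
    show "inT d (Bf ! i)" if "i < 3" for i using T that .
    show "adj (Bf ! i) = Bf ! i" if "i < 3" for i using that AH WH unfolding Bf_def less3 by auto
    show "mmul d (Bf ! i) (Bf ! i) = Idm d" if "i < 3" for i using that AS WS unfolding Bf_def less3 by auto
    show "mmul d (Idm d) (Bf ! i) = mmul d (Bf ! i) (Idm d)" if "i < 3" for i
      using T[OF that] by (simp add: Idm_l Idm_r)
    have r25: "mmul d (A 2) (A 5) = msc (-1) (mmul d (A 5) (A 2))" "mmul d (A 5) (A 2) = msc (-1) (mmul d (A 2) (A 5))"
      using AR[of 2 5] AR[of 5 2] G7_tab by auto
    show "mmul d (Bf ! i) (Bf ! j) = msc (-1) (mmul d (Bf ! j) (Bf ! i))" if "i < 3" "j < 3" "i \<noteq> j" for i j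
      using that r25 Wa[of 2] Wa[of 5] unfolding Bf_def less3 by auto
  qed
  have U1: "A (Suc 0) = U" unfolding U_def by simp
  have PpB: "Re (phi d \<rho> (mmul d Pp B)) = (f B + f (mmul d W B))/2" if "inT d B" for B
    unfolding Pp_def mmul_msc_l mmul_madd_l Idm_l[OF that] phi_msc phi_madd f_def by simp
  have PmB: "Re (phi d \<rho> (mmul d Pm B)) = (f B - f (mmul d W B))/2" if "inT d B" for B
    unfolding Pm_def Wm_def mmul_msc_l mmul_madd_l Idm_l[OF that] phi_msc phi_madd f_def by simp
  have fPp: "Re (phi d \<rho> Pp) = (1 + f W)/2"
    unfolding Pp_def phi_msc phi_madd phi_Idm[OF dens] f_def by simp
  have fPm: "Re (phi d \<rho> Pm) = (1 - f W)/2"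
    unfolding Pm_def Wm_def phi_msc phi_madd phi_Idm[OF dens] f_def by simp
  have R1': "((f (A 0) + f (mmul d W (A 0)))/2)^2 + ((f (A 3) + f (mmul d W (A 3)))/2)^2
      + ((f (A 4) + f (mmul d W (A 4)))/2)^2 + ((f U + f V)/2)^2 \<le> ((1 + f W)/2)^2"
    using R1 unfolding sum4 ix_def fPp by (simp add: PpB AT WU U1 UT)
  have R2': "((f (A 0) - f (mmul d W (A 0)))/2)^2 + ((f (A 3) - f (mmul d W (A 3)))/2)^2
      + ((f (A 4) - f (mmul d W (A 4)))/2)^2 + ((f U - f V)/2)^2 \<le> ((1 - f W)/2)^2"
    using R2 unfolding sum4 ix_def fPm by (simp add: PmB AT WU U1 UT)
  have R3': "(f (A 2))^2 + (f (A 5))^2 + (f W)^2 \<le> 1"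
    using R3 unfolding sum3 Bf_def phi_Idm[OF dens] by (simp add: Idm_l AT WT f_def)
  show ?thesis unfolding sum7 f_def[symmetric] U_def[symmetric] V_def[symmetric]
    using final_arith[OF R1' R2' R3'] by (simp add: U1)
qed


lemma mtrace_madd: "mtrace d (madd A B) = mtrace d A + mtrace d B"
  unfolding mtrace_def madd_def by (simp add: sum.distrib)
lemma mtrace_msc: "mtrace d (msc c A) = c * mtrace d A"
  unfolding mtrace_def msc_def by (simp add: sum_distrib_left)
lemma mtrace_Idm: "mtrace d (Idm d) = of_nat d"
  unfolding mtrace_def Idm_def by simp
lemma mtrace_cyc: "mtrace d (mmul d X Y) = mtrace d (mmul d Y X)"
  unfolding mtrace_def mmul_def by (subst sum.swap) (simp add: mult.commute)

lemma trace_zero: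
  assumes AT: "inT d A" and CC: "mmul d C C = Idm d" and AC: "mmul d A C = msc (-1) (mmul d C A)"
  shows "mtrace d A = 0"
proof -
  have CA: "mmul d C A = msc (-1) (mmul d A C)" by (rule rel_sym[OF _ AC]) simp
  have e: "mmul d C (mmul d A C) = msc (-1) A"
    by (simp only: mmul_assoc[symmetric] CA mmul_msc_l) (simp add: mmul_assoc CC Idm_r[OF AT])
  have "mtrace d A = mtrace d (mmul d (mmul d A C) C)"
    by (simp add: mmul_assoc CC Idm_r[OF AT])
  also have "\<dots> = mtrace d (mmul d C (mmul d A C))" by (rule mtrace_cyc)
  also have "\<dots> = - mtrace d A" unfolding e mtrace_msc by simp
  finally show ?thesis by simp
qed

definition qf :: "nat \<Rightarrow> cmat \<Rightarrow> (nat \<Rightarrow> complex) \<Rightarrow> complex" where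
  "qf d M v = (\<Sum>i<d. \<Sum>j<d. cnj (v i) * M i j * v j)"

lemma cnj_self_nonneg: "0 \<le> cnj z * (z::complex)"
proof -
  have "cnj z * z = complex_of_real ((cmod z)^2)" by (simp add: complex_norm_square[symmetric] mult.commute)
  then show ?thesis by (simp add: less_eq_complex_def)
qed

lemma qf_pos: "0 \<le> qf d (mmul d (adj Y) Y) v"
proof -
  have "qf d (mmul d (adj Y) Y) v = (\<Sum>i<d. \<Sum>j<d. \<Sum>l<d. cnj (v i) * cnj (Y l i) * Y l j * v j)"
    unfolding qf_def mmul_def adj_def by (simp add: sum_distrib_left sum_distrib_right mult_ac)
  also have "\<dots> = (\<Sum>i<d. \<Sum>l<d. \<Sum>j<d. cnj (v i) * cnj (Y l i) * Y l j * v j)"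
    by (rule sum.cong[OF refl], rule sum.swap)
  also have "\<dots> = (\<Sum>l<d. \<Sum>i<d. \<Sum>j<d. cnj (v i) * cnj (Y l i) * Y l j * v j)"
    by (rule sum.swap)
  also have "\<dots> = (\<Sum>l<d. cnj (\<Sum>i<d. Y l i * v i) * (\<Sum>j<d. Y l j * v j))"
    by (simp add: sum_distrib_left sum_distrib_right mult_ac)
  finally have e: "qf d (mmul d (adj Y) Y) v = (\<Sum>l<d. cnj (\<Sum>i<d. Y l i * v i) * (\<Sum>j<d. Y l j * v j))" .
  have "0 \<le> (\<Sum>l<d. cnj (\<Sum>i<d. Y l i * v i) * (\<Sum>j<d. Y l j * v j))"
    by (intro sum_nonneg cnj_self_nonneg)
  then show ?thesis by (simp only: e)
qed

lemma pos_c: "0 \<le> (1 / (4 * of_nat d) :: complex)"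
proof -
  have "(1 / (4 * of_nat d) :: complex) = of_real (1 / (4 * real d))" by simp
  then show ?thesis by (simp add: less_eq_complex_def)
qed

lemma lower_abstract:
  assumes d: "d > 0"
  and AT: "inT d A" and AH: "adj A = A" and AS: "mmul d A A = Idm d"
  and BT: "inT d B" and BH: "adj B = B" and BS: "mmul d B B = Idm d"
  and AB: "mmul d A B = mmul d B A"
  and trA: "mtrace d A = 0" and trB: "mtrace d B = 0" and trAB: "mtrace d (mmul d A B) = 0"
  defines "X \<equiv> mmul d (madd (Idm d) A) (madd (Idm d) B)"
  shows "density d (msc (1 / of_nat d) X)"
    "phi d (msc (1 / of_nat d) X) A = 1" "phi d (msc (1 / of_nat d) X) B = 1"
proof -
  have XT: "inT d X" unfolding X_def by (intro inT_mmul inT_madd inT_Idm AT BT)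
  have Xe: "X = madd (madd (Idm d) A) (madd B (mmul d A B))"
    unfolding X_def mmul_madd_l mmul_madd_r Idm_l[OF inT_Idm] Idm_l[OF BT] Idm_r[OF AT] ..
  have trX: "mtrace d X = of_nat d" unfolding Xe mtrace_madd trA trB trAB mtrace_Idm by simp
  have X2: "X = mmul d (madd (Idm d) B) (madd (Idm d) A)"
    unfolding X_def mmul_madd_l mmul_madd_r Idm_l[OF inT_Idm] Idm_l[OF BT] Idm_r[OF AT] Idm_l[OF AT] Idm_r[OF BT] AB
    by (simp add: madd_def fun_eq_iff ac_simps)
  have XH: "adj X = X" unfolding X_def adj_mmul adj_madd adj_Idm AH BH X2[unfolded X_def] ..
  have IA: "mmul d (madd (Idm d) A) A = madd (Idm d) A"
    unfolding mmul_madd_l AS Idm_l[OF AT] by (simp add: madd_def fun_eq_iff ac_simps)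
  have IB: "mmul d (madd (Idm d) B) B = madd (Idm d) B"
    unfolding mmul_madd_l BS Idm_l[OF BT] by (simp add: madd_def fun_eq_iff ac_simps)
  have BA': "mmul d (madd (Idm d) B) A = mmul d A (madd (Idm d) B)"
    unfolding mmul_madd_l mmul_madd_r Idm_l[OF AT] Idm_r[OF AT] AB ..
  have XA: "mmul d X A = X"
    unfolding X_def mmul_assoc BA' by (simp add: mmul_assoc[symmetric] IA)
  have AB': "mmul d (madd (Idm d) A) B = mmul d B (madd (Idm d) A)"
    unfolding mmul_madd_l mmul_madd_r Idm_l[OF BT] Idm_r[OF BT] AB ..
  have XB: "mmul d X B = X"
    by (subst (1 2) X2, unfold mmul_assoc AB') (simp add: mmul_assoc[symmetric] IB)
  have XIA: "mmul d X (madd (Idm d) A) = msc 2 X"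
    unfolding mmul_madd_r Idm_r[OF XT] XA by (simp add: madd_def msc_def fun_eq_iff)
  have XIB: "mmul d X (madd (Idm d) B) = msc 2 X"
    unfolding mmul_madd_r Idm_r[OF XT] XB by (simp add: madd_def msc_def fun_eq_iff)
  have XX: "mmul d X X = msc 4 X"
  proof -
    have "mmul d X X = mmul d (mmul d X (madd (Idm d) A)) (madd (Idm d) B)"
      by (simp add: X_def mmul_assoc)
    also have "\<dots> = msc 4 X" unfolding XIA mmul_msc_l XIB msc_msc by simp
    finally show ?thesis .
  qed
  show "phi d (msc (1 / of_nat d) X) A = 1"
    unfolding phi_def mmul_msc_l mtrace_msc XA trX using d by simp
  show "phi d (msc (1 / of_nat d) X) B = 1"
    unfolding phi_def mmul_msc_l mtrace_msc XB trX using d by simp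
  show "density d (msc (1 / of_nat d) X)"
    unfolding density_def
  proof (intro conjI allI impI)
    fix i j assume "i < d" "j < d"
    show "msc (1 / of_nat d) X j i = cnj (msc (1 / of_nat d) X i j)"
      using fun_cong[OF fun_cong[OF XH, of j], of i] unfolding msc_def adj_def by simp
  next
    fix v
    have "qf d (msc (1 / of_nat d) X) v = (1 / (4 * of_nat d)) * qf d (mmul d (adj X) X) v"
      unfolding XH XX qf_def msc_def by (simp add: sum_distrib_left mult_ac)
    also have "0 \<le> \<dots>" using qf_pos[of d X v] pos_c[of d] by (intro mult_nonneg_nonneg) auto
    finally show "0 \<le> (\<Sum>i<d. \<Sum>j<d. cnj (v i) * msc (1 / of_nat d) X i j * v j)"
      unfolding qf_def .
  next
    show "mtrace d (msc (1 / of_nat d) X) = 1" unfolding mtrace_msc trX using d by simp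
  qed
qed


lemma adj_trunc: "adj (trunc d M) = trunc d (adj M)"
  unfolding adj_def trunc_def fun_eq_iff by simp
lemma adj_ps: "adj (pstring_mat P) = pstring_mat P"
proof (rule ext, rule ext)
  fix i j
  have "pstring_mat P i j = cnj (pstring_mat P j i)" by (rule pstring_herm)
  then show "adj (pstring_mat P) i j = pstring_mat P i j" unfolding adj_def by simp
qed

lemma sq_trunc: "length P = m \<Longrightarrow> mmul (2^m) (trunc (2^m) (pstring_mat P)) (trunc (2^m) (pstring_mat P)) = Idm (2^m)"
  unfolding trunc_mmul by (auto simp: fun_eq_iff trunc_def Idm_def pstring_sq)

lemma anti_trunc: "anticommute d X Y \<Longrightarrow> mmul d (trunc d X) (trunc d Y) = msc (-1) (mmul d (trunc d Y) (trunc d X))"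
  unfolding trunc_mmul anticommute_def by (auto simp: fun_eq_iff trunc_def msc_def)
lemma comm_trunc: "commute d X Y \<Longrightarrow> mmul d (trunc d X) (trunc d Y) = mmul d (trunc d Y) (trunc d X)"
  unfolding trunc_mmul commute_def by (auto simp: fun_eq_iff trunc_def)

lemma real_facts:
  assumes R: "realization G7 7 S m"
  defines "A \<equiv> \<lambda>i. trunc (2^m) (pstring_mat (S i))"
  shows "\<And>i. i < 7 \<Longrightarrow> inT (2^m) (A i)"
    "\<And>i. i < 7 \<Longrightarrow> adj (A i) = A i"
    "\<And>i. i < 7 \<Longrightarrow> mmul (2^m) (A i) (A i) = Idm (2^m)"
    "\<And>i j. i < 7 \<Longrightarrow> j < 7 \<Longrightarrow> i \<noteq> j \<Longrightarrow> mmul (2^m) (A i) (A j) = msc (if G7 i j then -1 else 1) (mmul (2^m) (A j) (A i))"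
proof -
  show "\<And>i. i < 7 \<Longrightarrow> inT (2^m) (A i)" "\<And>i. i < 7 \<Longrightarrow> adj (A i) = A i"
    "\<And>i. i < 7 \<Longrightarrow> mmul (2^m) (A i) (A i) = Idm (2^m)"
    using R unfolding A_def realization_def by (auto simp: inT_trunc adj_trunc adj_ps sq_trunc)
  fix i j :: nat assume ij: "i < 7" "j < 7" "i \<noteq> j"
  show "mmul (2^m) (A i) (A j) = msc (if G7 i j then -1 else 1) (mmul (2^m) (A j) (A i))"
  proof (cases "G7 i j")
    case True
    then have "anticommute (2^m) (pstring_mat (S i)) (pstring_mat (S j))"
      using R ij unfolding realization_def by auto
    then show ?thesis using True unfolding A_def by (simp add: anti_trunc)
  next
    case False
    then have c: "commute (2^m) (pstring_mat (S i)) (pstring_mat (S j))"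
      using R ij unfolding realization_def by auto
    then show ?thesis using False unfolding A_def by (simp add: comm_trunc[OF c])
  qed
qed

lemma upper_concrete:
  assumes R: "realization G7 7 S m" and dens: "density (2^m) \<rho>"
  shows "(\<Sum>i<7. (\<lambda>_. 1) i * (Re (mtrace (2^m) (mmul (2^m) \<rho> (pstring_mat (S i)))))^2) \<le> (2::real)"
proof -
  have "(\<Sum>i<7. (Re (phi (2^m) \<rho> (trunc (2^m) (pstring_mat (S i)))))^2) \<le> 2"
    by (rule upper_abstract[OF dens real_facts[OF R]])
  then show ?thesis unfolding phi_trunc by (simp add: phi_def)
qed

lemma lower_concrete:
  assumes R: "realization G7 7 S m"
  shows "\<exists>\<rho>. density (2^m) \<rho> \<and> (\<Sum>i<7. (\<lambda>_. 1) i * (Re (mtrace (2^m) (mmul (2^m) \<rho> (pstring_mat (S i)))))^2) \<ge> (2::real)"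
proof -
  define d :: nat where "d = 2^m"
  define A where "A = (\<lambda>i. trunc d (pstring_mat (S i)))"
  have F1: "\<And>i. i < 7 \<Longrightarrow> inT d (A i)" using real_facts(1)[OF R] unfolding A_def d_def by simp
  have F2: "\<And>i. i < 7 \<Longrightarrow> adj (A i) = A i" using real_facts(2)[OF R] unfolding A_def d_def by simp
  have F3: "\<And>i. i < 7 \<Longrightarrow> mmul d (A i) (A i) = Idm d" using real_facts(3)[OF R] unfolding A_def d_def by simp
  have F4: "mmul d (A i) (A j) = msc (if G7 i j then -1 else 1) (mmul d (A j) (A i))"
    if "i < 7" "j < 7" "i \<noteq> j" for i j
    unfolding A_def d_def using real_facts(4)[OF R that] .
  note F = F1 F2 F3 F4
  have r01: "mmul d (A 0) (A 1) = msc (-1) (mmul d (A 1) (A 0))" using F4[of 0 1] G7_tab by simp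
  have r21: "mmul d (A 2) (A 1) = msc (-1) (mmul d (A 1) (A 2))" using F4[of 2 1] G7_tab by simp
  have r02: "mmul d (A 0) (A 2) = mmul d (A 2) (A 0)" using F4[of 0 2] G7_tab by simp
  have r40: "mmul d (A 4) (A 0) = msc (-1) (mmul d (A 0) (A 4))" using F4[of 4 0] G7_tab by simp
  have r42: "mmul d (A 4) (A 2) = mmul d (A 2) (A 4)" using F4[of 4 2] G7_tab by simp
  have r4p: "mmul d (A 4) (mmul d (A 0) (A 2)) = msc (-1) (mmul d (mmul d (A 0) (A 2)) (A 4))"
  proof -
    have r42': "mmul d (A 4) (A 2) = msc 1 (mmul d (A 2) (A 4))" using r42 by simp
    show ?thesis using rel_prod[OF r40 r42'] by simp
  qed
  have trA: "mtrace d (A 0) = 0" by (rule trace_zero[OF F1 F3 r01]) auto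
  have trB: "mtrace d (A 2) = 0" by (rule trace_zero[OF F1 F3 r21]) auto
  have trAB: "mtrace d (mmul d (A 0) (A 2)) = 0"
    by (rule trace_zero[OF inT_mmul[OF F1 F1] F3 rel_sym[OF _ r4p]]) auto
  define X where "X = mmul d (madd (Idm d) (A 0)) (madd (Idm d) (A 2))"
  have d0: "d > 0" unfolding d_def by simp
  note L = lower_abstract[OF d0 F1 F2 F3 F1 F2 F3 r02 trA trB trAB, folded X_def]
  define \<rho> where "\<rho> = msc (1 / of_nat d) X"
  have dens: "density d \<rho>" unfolding \<rho>_def by (rule L(1)) auto
  have p0: "Re (phi d \<rho> (A 0)) = 1" unfolding \<rho>_def using L(2) by simp
  have p2: "Re (phi d \<rho> (A 2)) = 1" unfolding \<rho>_def using L(3) by simp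
  have "(\<Sum>i<7. (Re (phi d \<rho> (A i)))^2) \<ge> 2"
    unfolding sum7 p0 p2 by (simp add: add_nonneg_nonneg)
  then show ?thesis using dens unfolding A_def d_def phi_trunc by (auto simp: phi_def)
qed



lemma less7: "i < (7::nat) \<longleftrightarrow> i = 0 \<or> i = 1 \<or> i = 2 \<or> i = 3 \<or> i = 4 \<or> i = 5 \<or> i = 6" by auto
lemma prod3: "(\<Prod>i<(3::nat). g i) = g 0 * g 1 * g 2"
  by (simp add: eval_nat_numeral ac_simps)

lemma anti_of_sign:
  assumes "length P = m" "length Q = m" "(\<Prod>k<m. psg (P!k) (Q!k)) = -1"
  shows "anticommute (2^m) (pstring_mat P) (pstring_mat Q)"
  unfolding anticommute_def using pstring_comm[OF assms(1,2)] assms(3) by simp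
lemma comm_of_sign:
  assumes "length P = m" "length Q = m" "(\<Prod>k<m. psg (P!k) (Q!k)) = 1"
  shows "commute (2^m) (pstring_mat P) (pstring_mat Q)"
  unfolding commute_def using pstring_comm[OF assms(1,2)] assms(3) by simp

definition S0 :: "nat \<Rightarrow> pauli list" where
  "S0 i = (if i = 0 then [PZ,PI,PI] else if i = 1 then [PX,PX,PI] else if i = 2 then [PI,PZ,PI]
     else if i = 3 then [PY,PX,PX] else if i = 4 then [PY,PI,PZ] else if i = 5 then [PZ,PY,PI] else [PX,PI,PI])"
definition sg :: "nat \<Rightarrow> nat \<Rightarrow> complex" where
  "sg i j = psg (S0 i!0) (S0 j!0) * psg (S0 i!1) (S0 j!1) * psg (S0 i!2) (S0 j!2)"
lemma S0_signs0: "i < 7 \<Longrightarrow> j < 7 \<Longrightarrow> i \<noteq> j \<Longrightarrow> (G7 i j \<longrightarrow> sg i j = -1) \<and> (\<not> G7 i j \<longrightarrow> sg i j = 1)"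
  unfolding less7 by (elim disjE) (simp_all add: sg_def S0_def psg_def G7_def G7_edges_def)
lemma S0_signs:
  "\<forall>i<7. \<forall>j<7. i \<noteq> j \<longrightarrow> (G7 i j \<longrightarrow> (\<Prod>k<3. psg (S0 i!k) (S0 j!k)) = -1) \<and> (\<not> G7 i j \<longrightarrow> (\<Prod>k<3. psg (S0 i!k) (S0 j!k)) = 1)"
  using S0_signs0 unfolding prod3 sg_def by blast

lemma S0_real: "realization G7 7 S0 3"
  unfolding realization_def
proof (intro conjI allI impI)
  fix i :: nat assume "i < 7" then show "length (S0 i) = 3" unfolding less7 by (auto simp: S0_def)
next
  fix i j :: nat assume ij: "i < 7" "j < 7" "i \<noteq> j"
  have L: "length (S0 i) = 3" "length (S0 j) = 3" using ij unfolding less7 by (auto simp: S0_def)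
  { assume "G7 i j" then show "anticommute (2^3) (pstring_mat (S0 i)) (pstring_mat (S0 j))"
      using S0_signs ij by (intro anti_of_sign L) auto }
  { assume "\<not> G7 i j" then show "commute (2^3) (pstring_mat (S0 i)) (pstring_mat (S0 j))"
      using S0_signs ij by (intro comm_of_sign L) auto }
qed

lemma no_tri: "a < 7 \<Longrightarrow> b < 7 \<Longrightarrow> c < 7 \<Longrightarrow> a \<noteq> b \<Longrightarrow> a \<noteq> c \<Longrightarrow> b \<noteq> c \<Longrightarrow>
   \<not> G7 a b \<Longrightarrow> \<not> G7 a c \<Longrightarrow> \<not> G7 b c \<Longrightarrow> False"
  unfolding less7 by (elim disjE) (simp_all add: G7_def G7_edges_def)

lemma indep_card:
  assumes "I \<subseteq> {..<7}" "independent G7 I"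
  shows "card I \<le> 2"
proof (rule ccontr)
  assume "\<not> card I \<le> 2"
  then have "3 \<le> card I" by simp
  then obtain T where T: "T \<subseteq> I" "card T = 3" by (meson obtain_subset_with_card_n)
  then obtain a b c where "T = {a,b,c}" "a \<noteq> b" "b \<noteq> c" "a \<noteq> c" by (auto simp: card_3_iff)
  then show False using no_tri[of a b c] T assms unfolding independent_def by auto
qed

lemma alpha_G7: "alpha G7 7 (\<lambda>_. 1) = 2"
proof -
  have eq: "{(\<Sum>i\<in>I. (\<lambda>_. 1::real) i) | I. I \<subseteq> {..<7} \<and> independent G7 I}
      = (\<lambda>I. real (card I)) ` {I. I \<subseteq> {..<7} \<and> independent G7 I}" by auto
  show ?thesis unfolding alpha_def eq
  proof (rule Max_eqI)
    show "finite ((\<lambda>I. real (card I)) ` {I. I \<subseteq> {..<7} \<and> independent G7 I})"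
      by (rule finite_imageI, rule finite_subset[of _ "Pow {..<7}"]) auto
    show "y \<le> 2" if "y \<in> (\<lambda>I. real (card I)) ` {I. I \<subseteq> {..<7} \<and> independent G7 I}" for y
      using that indep_card by fastforce
    have "{0,2} \<in> {I. I \<subseteq> {..<7} \<and> independent G7 I}"
      by (auto simp: independent_def G7_def G7_edges_def)
    then show "2 \<in> (\<lambda>I. real (card I)) ` {I. I \<subseteq> {..<7} \<and> independent G7 I}"
      by (rule rev_image_eqI) simp
  qed
qed

theorem mainTheorem15:
  shows "(\<exists>S m. realization G7 7 S m)
       \<and> (\<forall>S m. realization G7 7 S m \<longrightarrow> beta 7 (\<lambda>_. 1) S m = 2)
       \<and> alpha G7 7 (\<lambda>_. 1) = 2"
proof (intro conjI allI impI)
  show "\<exists>S m. realization G7 7 S m" using S0_real by blast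
  show "alpha G7 7 (\<lambda>_. 1) = 2" by (rule alpha_G7)
  fix S m assume R: "realization G7 7 S m"
  show "beta 7 (\<lambda>_. 1) S m = 2"
    unfolding beta_def
  proof (rule cSup_eq_maximum)
    obtain \<rho> where r: "density (2^m) \<rho>" "(\<Sum>i<7. (\<lambda>_. 1) i * (Re (mtrace (2^m) (mmul (2^m) \<rho> (pstring_mat (S i)))))^2) \<ge> (2::real)"
      using lower_concrete[OF R] by blast
    have "(\<Sum>i<7. (\<lambda>_. 1) i * (Re (mtrace (2^m) (mmul (2^m) \<rho> (pstring_mat (S i)))))^2) = (2::real)"
      using r upper_concrete[OF R r(1)] by linarith
    then show "2 \<in> {(\<Sum>i<7. (\<lambda>_. 1) i * (Re (mtrace (2 ^ m) (mmul (2 ^ m) \<rho> (pstring_mat (S i)))))\<^sup>2) |\<rho>. density (2 ^ m) \<rho>}"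
      using r(1) by force
  next
    fix x assume "x \<in> {(\<Sum>i<7. (\<lambda>_. 1) i * (Re (mtrace (2 ^ m) (mmul (2 ^ m) \<rho> (pstring_mat (S i)))))\<^sup>2) |\<rho>. density (2 ^ m) \<rho>}"
    then show "x \<le> 2" using upper_concrete[OF R] by auto
  qed
qed


end
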